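(* Let $a,\Theta\in l_0(\mathbb{Z})$ be filters, neither identically zero, with $\Theta^\star=\Theta$, and suppose $\det\mathcal M_{a,\Theta}(z)\equiv0$. Then $\Theta$ does not change sign on $\mathbb{T}$, i.e. either $\Theta(z)\ge0$ for all $z\in\mathbb{T}$ or $\Theta(z)\le0$ for all $z\in\mathbb{T}$. Moreover, $\Theta(z)\ge0$ on $\mathbb{T}$ if and only if $s^+_{a,\Theta}=1$ and $s^-_{a,\Theta}=0$, and $\Theta(z)\le0$ on $\mathbb{T}$ if and only if $s^+_{a,\Theta}=0$ and $s^-_{a,\Theta}=1$.
   Context: $l_0(\mathbb{Z})$: finitely supported sequences $u$, with $u(z)=\sum_ku(k)z^k$ and $u^\star(z)=\sum_k\overline{u(k)}z^{-k}$. $\mathbb{T}$ is the unit circle (note $\Theta(z)\in\mathbb{R}$ for $z\in\mathbb{T}$ since $\Theta^\star=\Theta$). $\mathcal M_{a,\Theta}(z)=\begin{bmatrix}\Theta(z)-\Theta(z^2)a(z)a^\star(z)&-\Theta(z^2)a(z)a^\star(-z)\\-\Theta(z^2)a(-z)a^\star(z)&\Theta(-z)-\Theta(z^2)a(-z)a^\star(-z)\end{bmatrix}$. $s^\pm_{a,\Theta}:=\max_{z\in\mathbb{T}}\nu_\pm(\mathcal M_{a,\Theta}(z))$ where $\nu_\pm(H)$ are the numbers of positive/negative eigenvalues of a Hermitian matrix $H$. *)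

theory Defs
  imports Complex_Main "Jordan_Normal_Form.Char_Poly"
begin

text \<open>Filters in l_0(Z) are finitely supported functions int => complex
  (finite support is stated as an explicit hypothesis).
  Symbol (Laurent polynomial) u(z) = sum_k u(k) z^k.\<close>
definition symb :: "(int \<Rightarrow> complex) \<Rightarrow> complex \<Rightarrow> complex" where
  "symb u z = (\<Sum>k\<in>{k. u k \<noteq> 0}. u k * z powi k)"

definition symb_star :: "(int \<Rightarrow> complex) \<Rightarrow> complex \<Rightarrow> complex" where
  "symb_star u z = (\<Sum>k\<in>{k. u k \<noteq> 0}. cnj (u k) * z powi (- k))"

definition unit_circle :: "complex set" where
  "unit_circle = {z. cmod z = 1}"

definition Mmat :: "(int \<Rightarrow> complex) \<Rightarrow> (int \<Rightarrow> complex) \<Rightarrow> complex \<Rightarrow> complex mat" where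
  "Mmat a \<Theta> z = mat 2 2 (\<lambda>(i,j).
     if i = 0 \<and> j = 0 then symb \<Theta> z - symb \<Theta> (z^2) * symb a z * symb_star a z
     else if i = 0 \<and> j = 1 then - symb \<Theta> (z^2) * symb a z * symb_star a (-z)
     else if i = 1 \<and> j = 0 then - symb \<Theta> (z^2) * symb a (-z) * symb_star a z
     else symb \<Theta> (-z) - symb \<Theta> (z^2) * symb a (-z) * symb_star a (-z))"

definition nu_pos :: "complex mat \<Rightarrow> nat" where
  "nu_pos H = (\<Sum>x\<in>{x. poly (char_poly H) x = 0 \<and> x \<in> \<real> \<and> Re x > 0}. order x (char_poly H))"

definition nu_neg :: "complex mat \<Rightarrow> nat" where
  "nu_neg H = (\<Sum>x\<in>{x. poly (char_poly H) x = 0 \<and> x \<in> \<real> \<and> Re x < 0}. order x (char_poly H))"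

definition s_pos :: "(int \<Rightarrow> complex) \<Rightarrow> (int \<Rightarrow> complex) \<Rightarrow> nat" where
  "s_pos a \<Theta> = Max ((\<lambda>z. nu_pos (Mmat a \<Theta> z)) ` unit_circle)"

definition s_neg :: "(int \<Rightarrow> complex) \<Rightarrow> (int \<Rightarrow> complex) \<Rightarrow> nat" where
  "s_neg a \<Theta> = Max ((\<lambda>z. nu_neg (Mmat a \<Theta> z)) ` unit_circle)"

end

theory Submission
  imports Defs "HOL-Complex_Analysis.Complex_Analysis"
begin

hide_const (open) Finite_Cartesian_Product.mat Determinants.det

lemma ivt0:
  fixes f :: "real \<Rightarrow> real"
  assumes c: "continuous_on UNIV f" and ab: "a \<le> b"
    and s: "(f a \<le> 0 \<and> 0 \<le> f b) \<or> (f b \<le> 0 \<and> 0 \<le> f a)"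
  shows "\<exists>x. a \<le> x \<and> x \<le> b \<and> f x = 0"
proof -
  have c': "continuous_on {a..b} f" using c continuous_on_subset by blast
  show ?thesis using s
  proof
    assume "f a \<le> 0 \<and> 0 \<le> f b" then show ?thesis using IVT'[of f a 0 b] c' ab by auto
  next
    assume "f b \<le> 0 \<and> 0 \<le> f a" then show ?thesis using IVT2'[of f b 0 a] c' ab by auto
  qed
qed

lemma sign_step:
  fixes f :: "real \<Rightarrow> real"
  assumes cont: "continuous_on UNIV f"
    and per: "\<And>\<theta>. f (\<theta> + 2*pi) = f \<theta>"
    and dbl: "\<And>\<theta>. f (2*\<theta>) * K = f \<theta> * f (\<theta> + pi)" and K: "K > 0"
    and zer: "\<And>\<alpha>. f \<alpha> = 0 \<Longrightarrow> f (\<alpha> + pi) > 0"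
    and b0: "f \<beta> = 0" and neg: "\<And>\<theta>. \<beta> < \<theta> \<Longrightarrow> \<theta> < \<beta> + L \<Longrightarrow> f \<theta> < 0"
  shows "f (2*\<beta>) = 0 \<and> (\<forall>\<theta>. 2*\<beta> < \<theta> \<longrightarrow> \<theta> < 2*\<beta> + 2*L \<longrightarrow> f \<theta> < 0)"
proof
  show "f (2*\<beta>) = 0" using dbl[of \<beta>] b0 K by simp
  have g: "continuous_on UNIV (\<lambda>x. f (x + pi))"
    by (intro continuous_on_compose2[OF cont] continuous_intros) auto
  have pos: "f (\<theta> + pi) > 0" if th: "\<beta> < \<theta>" "\<theta> < \<beta> + L" for \<theta>
  proof (rule ccontr)
    assume "\<not> f (\<theta> + pi) > 0"
    then have "f (\<theta> + pi) \<le> 0" by simp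
    moreover have "f (\<beta> + pi) > 0" using zer b0 by simp
    ultimately obtain x where x: "\<beta> \<le> x" "x \<le> \<theta>" "f (x + pi) = 0"
      using ivt0[OF g, of \<beta> \<theta>] th by auto
    have "x \<noteq> \<beta>" using x(3) zer b0 by force
    then have "f x < 0" using neg x th by simp
    moreover have "f (x + pi + pi) > 0" using zer[OF x(3)] by simp
    moreover have "x + pi + pi = x + 2*pi" by simp
    ultimately show False using per[of x] by simp
  qed
  show "\<forall>\<theta>. 2*\<beta> < \<theta> \<longrightarrow> \<theta> < 2*\<beta> + 2*L \<longrightarrow> f \<theta> < 0"
  proof (intro allI impI)
    fix \<theta> assume th: "2*\<beta> < \<theta>" "\<theta> < 2*\<beta> + 2*L"
    let ?h = "\<theta>/2"
    have h: "\<beta> < ?h" "?h < \<beta> + L" using th by auto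
    have "f (2*?h) * K = f ?h * f (?h + pi)" by (rule dbl)
    moreover have "f ?h * f (?h + pi) < 0"
      using neg[OF h] pos[OF h] by (simp add: mult_neg_pos)
    ultimately have "f (2*?h) * K < 0" by simp
    then show "f \<theta> < 0" using K by (simp add: mult_less_0_iff)
  qed
qed

lemma sign_lemma:
  fixes f :: "real \<Rightarrow> real"
  assumes cont: "continuous_on UNIV f"
    and per: "\<And>\<theta>. f (\<theta> + 2*pi) = f \<theta>"
    and dbl: "\<And>\<theta>. f (2*\<theta>) * K = f \<theta> * f (\<theta> + pi)" and K: "K > 0"
    and zer: "\<And>\<alpha>. f \<alpha> = 0 \<Longrightarrow> f (\<alpha> + pi) > 0"
  shows "f \<theta>0 \<ge> 0"
proof (rule ccontr)
  assume "\<not> f \<theta>0 \<ge> 0"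
  then have n0: "f \<theta>0 < 0" by simp
  have "\<exists>\<zeta>. f \<zeta> = 0"
  proof (rule ccontr)
    assume nz: "\<not> (\<exists>\<zeta>. f \<zeta> = 0)"
    have allneg: "f x < 0" for x
    proof (rule ccontr)
      assume "\<not> f x < 0"
      then have "f x \<ge> 0" by simp
      then show False
        using ivt0[OF cont, of "min x \<theta>0" "max x \<theta>0"] n0 nz
        by (cases "x \<le> \<theta>0") (auto simp: min_def max_def)
    qed
    have "f (2*\<theta>0) * K > 0" using dbl[of \<theta>0] allneg[of \<theta>0] allneg[of "\<theta>0+pi"]
      by (simp add: mult_neg_neg)
    then show False using allneg[of "2*\<theta>0"] K by (simp add: zero_less_mult_iff)
  qed
  then obtain \<zeta> where z: "f \<zeta> = 0" by blast
  have pern: "f (x - real n * (2*pi)) = f x" for x n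
  proof (induction n)
    case (Suc n)
    have "f (x - real (Suc n) * (2*pi)) = f (x - real (Suc n) * (2*pi) + 2*pi)" by (rule per[symmetric])
    also have "x - real (Suc n) * (2*pi) + 2*pi = x - real n * (2*pi)" by (simp add: algebra_simps)
    finally show ?case using Suc by simp
  qed simp
  obtain n :: nat where n: "(\<zeta> - \<theta>0) / (2*pi) < real n" using reals_Archimedean2 by blast
  have "\<zeta> - real n * (2*pi) < \<theta>0" using n by (simp add: field_simps)
  define S where "S = {x. x \<le> \<theta>0 \<and> f x = 0}"
  have "\<zeta> - real n * (2*pi) \<in> S" unfolding S_def using pern[of \<zeta> n] z \<open>\<zeta> - real n * (2*pi) < \<theta>0\<close>
    by simp
  then have Sne: "S \<noteq> {}" by auto
  have Sbdd: "bdd_above S" unfolding S_def by (auto intro: bdd_aboveI)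
  have Scl: "closed S" unfolding S_def
    by (intro closed_Collect_conj closed_Collect_le closed_Collect_eq cont continuous_intros)
  define \<alpha> where "\<alpha> = Sup S"
  have aS: "\<alpha> \<in> S" unfolding \<alpha>_def by (rule closed_contains_Sup[OF Sne Sbdd Scl])
  then have a0: "f \<alpha> = 0" "\<alpha> \<le> \<theta>0" unfolding S_def by auto
  have "\<alpha> \<noteq> \<theta>0" using a0 n0 by auto
  with a0 have alt: "\<alpha> < \<theta>0" by simp
  have negI: "f \<theta> < 0" if th: "\<alpha> < \<theta>" "\<theta> \<le> \<theta>0" for \<theta>
  proof (rule ccontr)
    assume "\<not> f \<theta> < 0"
    then have "f \<theta> \<ge> 0" by simp
    then obtain x where x: "\<theta> \<le> x" "x \<le> \<theta>0" "f x = 0"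
      using ivt0[OF cont, of \<theta> \<theta>0] n0 th by auto
    then have "x \<in> S" unfolding S_def by auto
    then have "x \<le> \<alpha>" unfolding \<alpha>_def using Sbdd by (rule cSup_upper)
    then show False using x th by simp
  qed
  define L where "L = \<theta>0 - \<alpha>"
  have L0: "L > 0" using alt L_def by simp
  have it: "f (2^m * \<alpha>) = 0 \<and> (\<forall>\<theta>. 2^m*\<alpha> < \<theta> \<longrightarrow> \<theta> < 2^m*\<alpha> + 2^m*L \<longrightarrow> f \<theta> < 0)" for m :: nat
  proof (induction m)
    case 0
    then show ?case using a0 negI L_def by auto
  next
    case (Suc m)
    have "f (2*(2^m*\<alpha>)) = 0 \<and> (\<forall>\<theta>. 2*(2^m*\<alpha>) < \<theta> \<longrightarrow> \<theta> < 2*(2^m*\<alpha>) + 2*(2^m*L) \<longrightarrow> f \<theta> < 0)"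
      using Suc by (intro sign_step[OF cont per dbl K zer]) auto
    then show ?case by (simp add: mult.assoc)
  qed
  obtain m :: nat where m: "pi / L < 2^m"
    using real_arch_pow[of 2 "pi / L"] by auto
  have "pi < 2^m * L" using m L0 by (simp add: field_simps)
  then have "f (2^m*\<alpha> + pi) < 0" using it[of m] by auto
  moreover have "f (2^m*\<alpha> + pi) > 0" using zer it[of m] by auto
  ultimately show False by simp
qed

lemma powi_aux:
  fixes z :: complex
  assumes "z \<noteq> 0"
  shows "z powi (-D) * ((-z) powi (-D)) * (-1) powi D = (z^2) powi (-D)"
proof -
  have "(-z) powi (-D) = (-1) powi (-D) * z powi (-D)"
    using power_int_mult_distrib[of "-1" z "-D"] by simp
  moreover have "(-1::complex) powi (-D) * (-1) powi D = 1"
    by (simp add: power_int_minus)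
  moreover have "(z^2) powi (-D) = z powi (-D) * z powi (-D)"
    using power_int_mult_distrib[of z z "-D"] by (simp add: power2_eq_square)
  ultimately show ?thesis by (simp add: algebra_simps)
qed

lemma ratio_lim:
  assumes lim: "((\<lambda>z. symb \<Theta> z * z powi (-D)) \<longlongrightarrow> c) F" and c: "c \<noteq> 0"
    and um: "filterlim uminus F F" and sq: "filterlim (\<lambda>z::complex. z^2) F F"
    and ev0: "eventually (\<lambda>z. z \<noteq> 0) F"
    and idt: "\<And>z. z \<noteq> 0 \<Longrightarrow> symb \<Theta> z * symb \<Theta> (-z) = symb \<Theta> (z^2) * G z"
  shows "(G \<longlongrightarrow> c * (-1) powi D) F"
proof -
  have h2: "((\<lambda>z. symb \<Theta> (-z) * (-z) powi (-D)) \<longlongrightarrow> c) F"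
    using filterlim_compose[OF lim um] .
  have h3: "((\<lambda>z. symb \<Theta> (z^2) * (z^2) powi (-D)) \<longlongrightarrow> c) F"
    using filterlim_compose[OF lim sq] .
  have ev3: "eventually (\<lambda>z. symb \<Theta> (z^2) * (z^2) powi (-D) \<noteq> 0) F"
    using tendsto_imp_eventually_ne[OF h3 c] .
  have "((\<lambda>z. symb \<Theta> z * z powi (-D) * (symb \<Theta> (-z) * (-z) powi (-D)) / (symb \<Theta> (z^2) * (z^2) powi (-D)) * (-1) powi D)
        \<longlongrightarrow> c * c / c * (-1) powi D) F"
    by (intro tendsto_intros lim h2 h3 c)
  moreover have "c * c / c * (-1) powi D = c * (-1) powi D" using c by simp
  moreover have "eventually (\<lambda>z. symb \<Theta> z * z powi (-D) * (symb \<Theta> (-z) * (-z) powi (-D)) / (symb \<Theta> (z^2) * (z^2) powi (-D)) * (-1) powi D = G z) F"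
    using ev0 ev3
  proof eventually_elim
    case (elim z)
    have t0: "symb \<Theta> (z^2) \<noteq> 0" using elim by auto
    have "symb \<Theta> z * z powi (-D) * (symb \<Theta> (-z) * (-z) powi (-D)) / (symb \<Theta> (z^2) * (z^2) powi (-D)) * (-1) powi D
        = (symb \<Theta> z * symb \<Theta> (-z)) * (z powi (-D) * ((-z) powi (-D)) * (-1) powi D) / (symb \<Theta> (z^2) * (z^2) powi (-D))"
      by (simp add: algebra_simps)
    also have "\<dots> = (symb \<Theta> (z^2) * G z) * (z^2) powi (-D) / (symb \<Theta> (z^2) * (z^2) powi (-D))"
      using idt[OF elim(1)] powi_aux[OF elim(1)] by simp
    also have "\<dots> = G z" using elim(2) by (simp add: field_simps)
    finally show ?case .
  qed
  ultimately show ?thesis using Lim_transform_eventually by fastforce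
qed

lemma symb_lim_gen:
  assumes fin: "finite {k. u k \<noteq> 0}" and DS: "u D \<noteq> 0"
    and ev0: "eventually (\<lambda>z. z \<noteq> 0) F"
    and lim0: "\<And>k. u k \<noteq> 0 \<Longrightarrow> k \<noteq> D \<Longrightarrow> ((\<lambda>z::complex. z powi (k - D)) \<longlongrightarrow> 0) F"
  shows "((\<lambda>z. symb u z * z powi (-D)) \<longlongrightarrow> u D) F"
proof -
  let ?S = "{k. u k \<noteq> 0}"
  have lim: "((\<lambda>z. \<Sum>k\<in>?S. u k * z powi (k - D)) \<longlongrightarrow> (\<Sum>k\<in>?S. if k = D then u k else 0)) F"
  proof (rule tendsto_sum)
    fix k assume k: "k \<in> ?S"
    show "((\<lambda>z. u k * z powi (k - D)) \<longlongrightarrow> (if k = D then u k else 0)) F"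
    proof (cases "k = D")
      case True
      have "\<forall>\<^sub>F z in F. u k = u k * z powi (k - D)" using ev0 True by (auto elim: eventually_mono)
      then show ?thesis using True by (auto intro: tendsto_eventually)
    next
      case False
      then show ?thesis using lim0[of k] k tendsto_mult_right_zero by fastforce
    qed
  qed
  moreover have "(\<Sum>k\<in>?S. if k = D then u k else 0) = u D"
    using fin DS by (simp add: sum.delta)
  moreover have "\<forall>\<^sub>F z in F. (\<Sum>k\<in>?S. u k * z powi (k - D)) = symb u z * z powi (-D)"
    using ev0
  proof (rule eventually_mono)
    fix z :: complex assume "z \<noteq> 0"
    then show "(\<Sum>k\<in>?S. u k * z powi (k - D)) = symb u z * z powi (-D)"
      unfolding symb_def sum_distrib_right
    proof (intro sum.cong refl)
      fix k show "u k * z powi (k - D) = u k * z powi k * z powi - D"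
        using \<open>z \<noteq> 0\<close> by (simp add: power_int_add[symmetric])
    qed
  qed
  ultimately show ?thesis using Lim_transform_eventually by fastforce
qed

lemma symb_lim_inf:
  assumes fin: "finite {k. u k \<noteq> 0}" and ne: "u \<noteq> (\<lambda>_. 0)"
  shows "((\<lambda>z. symb u z * z powi (- Max {k. u k \<noteq> 0})) \<longlongrightarrow> u (Max {k. u k \<noteq> 0})) at_infinity"
proof -
  let ?S = "{k. u k \<noteq> 0}"
  have ne': "?S \<noteq> {}" using ne by auto
  show ?thesis
  proof (rule symb_lim_gen[OF fin])
    show "u (Max ?S) \<noteq> 0" using Max_in[OF fin ne'] by simp
    show "\<forall>\<^sub>F z in at_infinity. z \<noteq> (0::complex)"
      unfolding eventually_at_infinity by (rule exI[of _ 1]) auto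
    fix k assume k: "u k \<noteq> 0" "k \<noteq> Max ?S"
    then have lt: "k - Max ?S < 0" using Max_ge[OF fin, of k] by auto
    have "((\<lambda>z::complex. inverse z ^ nat (-(k - Max ?S))) \<longlongrightarrow> 0 ^ nat (-(k - Max ?S))) at_infinity"
      by (intro tendsto_power tendsto_inverse_0)
    moreover have "0 ^ nat (Max ?S - k) = (0::complex)" using lt by (simp add: power_0_left)
    ultimately show "((\<lambda>z::complex. z powi (k - Max ?S)) \<longlongrightarrow> 0) at_infinity"
      using lt by (simp add: power_int_def)
  qed
qed

lemma symb_lim_zero:
  assumes fin: "finite {k. u k \<noteq> 0}" and ne: "u \<noteq> (\<lambda>_. 0)"
  shows "((\<lambda>z. symb u z * z powi (- Min {k. u k \<noteq> 0})) \<longlongrightarrow> u (Min {k. u k \<noteq> 0})) (at 0)"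
proof -
  let ?S = "{k. u k \<noteq> 0}"
  have ne': "?S \<noteq> {}" using ne by auto
  show ?thesis
  proof (rule symb_lim_gen[OF fin])
    show "u (Min ?S) \<noteq> 0" using Min_in[OF fin ne'] by simp
    show "\<forall>\<^sub>F z in at 0. z \<noteq> (0::complex)"
      by (simp add: eventually_at_filter)
    fix k assume k: "u k \<noteq> 0" "k \<noteq> Min ?S"
    then have lt: "k - Min ?S > 0" using Min_le[OF fin, of k] by auto
    have "((\<lambda>z::complex. z ^ nat (k - Min ?S)) \<longlongrightarrow> 0 ^ nat (k - Min ?S)) (at 0)"
      by (intro tendsto_power tendsto_ident_at)
    moreover have "0 ^ nat (k - Min ?S) = (0::complex)" using lt by simp
    ultimately show "((\<lambda>z::complex. z powi (k - Min ?S)) \<longlongrightarrow> 0) (at 0)"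
      using lt by (simp add: power_int_def)
  qed
qed

lemma G_const:
  assumes fin: "finite {k. \<Theta> k \<noteq> 0}" and ne: "\<Theta> \<noteq> (\<lambda>_. 0)"
    and idt: "\<And>z. z \<noteq> 0 \<Longrightarrow> symb \<Theta> z * symb \<Theta> (-z) = symb \<Theta> (z^2) * G z"
    and holo: "G holomorphic_on (UNIV - {0})"
  shows "\<exists>c. c \<noteq> 0 \<and> (\<forall>z. z \<noteq> 0 \<longrightarrow> G z = c)"
proof -
  let ?S = "{k. \<Theta> k \<noteq> 0}"
  have ne': "?S \<noteq> {}" using ne by auto
  define c1 where "c1 = \<Theta> (Max ?S) * (-1) powi (Max ?S)"
  define c0 where "c0 = \<Theta> (Min ?S) * (-1) powi (Min ?S)"
  have ev_inf: "eventually (\<lambda>z::complex. z \<noteq> 0) at_infinity"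
    unfolding eventually_at_infinity by (rule exI[of _ 1]) auto
  have um_inf: "filterlim uminus at_infinity (at_infinity :: complex filter)"
    unfolding filterlim_at_infinity[OF order_refl] eventually_at_infinity
    by (auto intro: exI)
  have sq_inf: "filterlim (\<lambda>z::complex. z^2) at_infinity at_infinity"
    by (intro filterlim_power_at_infinity filterlim_ident) simp
  have um0: "filterlim uminus (at (0::complex)) (at 0)"
  proof (rule filterlim_atI)
    show "((\<lambda>x::complex. - x) \<longlongrightarrow> 0) (at 0)"
      using tendsto_minus[OF tendsto_ident_at[of "0::complex" UNIV]] by simp
    show "\<forall>\<^sub>F x in at (0::complex). - x \<noteq> 0" by (simp add: eventually_at_filter)
  qed
  have sq0: "filterlim (\<lambda>z::complex. z^2) (at 0) (at 0)"
  proof (rule filterlim_atI)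
    show "((\<lambda>x::complex. x^2) \<longlongrightarrow> 0) (at 0)"
      using tendsto_power[OF tendsto_ident_at[of "0::complex" UNIV], of 2] by simp
    show "\<forall>\<^sub>F x in at (0::complex). x^2 \<noteq> 0" by (simp add: eventually_at_filter)
  qed
  have Mne: "\<Theta> (Max ?S) \<noteq> 0" using Max_in[OF fin ne'] by simp
  have mne: "\<Theta> (Min ?S) \<noteq> 0" using Min_in[OF fin ne'] by simp
  have Linf: "(G \<longlongrightarrow> c1) at_infinity"
    unfolding c1_def
    by (rule ratio_lim[OF symb_lim_inf[OF fin ne] Mne um_inf sq_inf ev_inf idt])
  have L0: "(G \<longlongrightarrow> c0) (at 0)"
    unfolding c0_def
    by (rule ratio_lim[OF symb_lim_zero[OF fin ne] mne um0 sq0 _ idt]) (simp add: eventually_at_filter)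
  define g where "g = (\<lambda>z. if z = 0 then c0 else G z)"
  have gh: "g holomorphic_on UNIV"
    unfolding g_def by (rule removable_singularity[OF holo open_UNIV L0])
  have "(g \<longlongrightarrow> c1) at_infinity"
  proof (rule Lim_transform_eventually[OF Linf])
    show "\<forall>\<^sub>F x in at_infinity. G x = g x" using ev_inf
      by (rule eventually_mono) (simp add: g_def)
  qed
  then have gc: "g z = c1" for z using Liouville_weak[OF gh] by blast
  have "c1 \<noteq> 0" unfolding c1_def using Mne by simp
  moreover have "\<forall>z. z \<noteq> 0 \<longrightarrow> G z = c1" using gc unfolding g_def by (metis)
  ultimately show ?thesis by blast
qed

definition Ff :: "(int \<Rightarrow> complex) \<Rightarrow> (int \<Rightarrow> complex) \<Rightarrow> complex \<Rightarrow> complex" where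
  "Ff a \<Theta> z = symb \<Theta> z * symb a (-z) * symb_star a (-z) + symb \<Theta> (-z) * symb a z * symb_star a z"

lemma Ff_holo: "Ff a \<Theta> holomorphic_on (UNIV - {0})"
  unfolding Ff_def symb_def symb_star_def
  by (intro holomorphic_intros) auto

lemma symb_star_circle:
  assumes z: "cmod z = 1"
  shows "symb_star u z = cnj (symb u z)"
proof -
  have zi: "cnj z = inverse z"
    using z by (simp add: inverse_eq_divide complex_div_cnj[of 1 z] )
  show ?thesis
    unfolding symb_star_def symb_def cnj_sum
    by (intro sum.cong refl) (simp add: complex_cnj_power_int zi power_int_minus power_int_inverse)
qed

lemma symb_real_circle:
  assumes sym: "\<forall>k. \<Theta> (- k) = cnj (\<Theta> k)" and z: "cmod z = 1"
  shows "cnj (symb \<Theta> z) = symb \<Theta> z"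
proof -
  have "cnj (symb \<Theta> z) = symb_star \<Theta> z" using symb_star_circle[OF z] by simp
  also have "\<dots> = (\<Sum>k\<in>{k. \<Theta> k \<noteq> 0}. \<Theta> (-k) * z powi (- k))"
    unfolding symb_star_def using sym by (intro sum.cong refl) simp
  also have "\<dots> = symb \<Theta> z"
    unfolding symb_def
  proof (rule sum.reindex_bij_witness[of _ uminus uminus])
    fix k assume "k \<in> {k. \<Theta> k \<noteq> 0}"
    then show "- k \<in> {k. \<Theta> k \<noteq> 0}" using sym[rule_format, of k] by auto
  next
    fix k assume "k \<in> {k. \<Theta> k \<noteq> 0}"
    then show "- k \<in> {k. \<Theta> k \<noteq> 0}" using sym[rule_format, of k] by auto
  qed auto
  finally show ?thesis .
qed

lemma symb_abs_circle:
  assumes z: "cmod z = 1"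
  shows "symb u z * symb_star u z = complex_of_real ((cmod (symb u z))^2)"
  using symb_star_circle[OF z] complex_norm_square[of "symb u z"] by simp

lemma det2:
  fixes A :: "'a::comm_ring_1 mat"
  assumes A: "A \<in> carrier_mat 2 2"
  shows "det A = A$$(0,0)*A$$(1,1) - A$$(0,1)*A$$(1,0)"
proof -
  have "det A = (\<Sum>i<2. A $$ (i,0) * cofactor A i 0)"
    by (rule laplace_expansion_column[OF A]) simp
  also have "\<dots> = A $$ (0,0) * cofactor A 0 0 + A $$ (1,0) * cofactor A 1 0"
    by (simp add: numeral_2_eq_2)
  also have "cofactor A 0 0 = A$$(1,1)"
    unfolding cofactor_def using A
    by (subst det_single[of "mat_delete A 0 0"]) (auto simp: mat_delete_def)
  also have "cofactor A 1 0 = - A$$(0,1)"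
    unfolding cofactor_def using A
    by (subst det_single[of "mat_delete A 1 0"]) (auto simp: mat_delete_def)
  finally show ?thesis by (simp add: algebra_simps)
qed

lemma char_poly2:
  fixes A :: "'a::comm_ring_1 mat"
  assumes A: "A \<in> carrier_mat 2 2"
  shows "char_poly A = [: det A, -(A$$(0,0)+A$$(1,1)), 1:]"
proof -
  have C: "char_poly_matrix A \<in> carrier_mat 2 2" using A by simp
  show ?thesis
    unfolding char_poly_def det2[OF C] det2[OF A] using A
    by (simp add: char_poly_matrix_def algebra_simps)
qed

lemma nu_rank1:
  fixes A :: "complex mat"
  assumes A: "A \<in> carrier_mat 2 2" and d: "det A = 0"
    and tr: "A$$(0,0)+A$$(1,1) = complex_of_real \<tau>"
  shows "nu_pos A = (if \<tau> > 0 then 1 else 0) \<and> nu_neg A = (if \<tau> < 0 then 1 else 0)"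
proof -
  let ?t = "complex_of_real \<tau>"
  have cp: "char_poly A = [:-?t,1:] * [:0,1:]"
  proof -
    have "-(A$$(0,0)+A$$(1,1)) = - ?t" using tr by simp
    then show ?thesis using char_poly2[OF A] d by simp
  qed
  have pz: "poly (char_poly A) x = 0 \<longleftrightarrow> x = 0 \<or> x = ?t" for x
    unfolding cp by auto
  have ne: "char_poly A \<noteq> 0" unfolding cp by simp
  have ord: "order ?t (char_poly A) = 1" if "\<tau> \<noteq> 0"
  proof -
    have "order ?t [:0,1:] = 0"
      using that order_root[of "[:0,1::complex:]" ?t] by simp
    moreover have "order ?t [:-?t,1:] = 1"
      using order_power_n_n[of ?t 1] by simp
    moreover have "order ?t ([:-?t,1:] * [:0,1:]) = order ?t [:-?t,1:] + order ?t [:0,1:]"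
      by (rule order_mult) simp
    ultimately show ?thesis unfolding cp by simp
  qed
  have S1: "{x. poly (char_poly A) x = 0 \<and> x \<in> \<real> \<and> Re x > 0} = (if \<tau> > 0 then {?t} else {})"
    using pz by auto
  have S2: "{x. poly (char_poly A) x = 0 \<and> x \<in> \<real> \<and> Re x < 0} = (if \<tau> < 0 then {?t} else {})"
    using pz by auto
  show ?thesis
    unfolding nu_pos_def nu_neg_def S1 S2 using ord by auto
qed

lemma det_Mmat:
  "det (Mmat a \<Theta> z) = symb \<Theta> z * symb \<Theta> (-z) - symb \<Theta> (z^2) * Ff a \<Theta> z"
proof -
  have C: "Mmat a \<Theta> z \<in> carrier_mat 2 2" unfolding Mmat_def by simp
  show ?thesis unfolding det2[OF C] unfolding Mmat_def Ff_def
    by (simp add: algebra_simps)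
qed

lemma Mmat_trace:
  "Mmat a \<Theta> z $$ (0,0) + Mmat a \<Theta> z $$ (1,1) =
     symb \<Theta> z - symb \<Theta> (z^2) * (symb a z * symb_star a z)
     + (symb \<Theta> (-z) - symb \<Theta> (z^2) * (symb a (-z) * symb_star a (-z)))"
  unfolding Mmat_def by (simp add: algebra_simps)

lemma Max_const_image:
  assumes "x \<in> A" "\<And>y. y \<in> A \<Longrightarrow> g y = (v::nat)"
  shows "Max (g ` A) = v"
proof -
  have "g ` A = {v}" using assms by auto
  then show ?thesis by simp
qed

theorem mainTheorem15:
  fixes a \<Theta> :: "int \<Rightarrow> complex"
  assumes "finite {k. a k \<noteq> 0}" and "finite {k. \<Theta> k \<noteq> 0}"
    and "a \<noteq> (\<lambda>_. 0)" and "\<Theta> \<noteq> (\<lambda>_. 0)"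
    and "\<forall>k. \<Theta> (- k) = cnj (\<Theta> k)"
    and "\<forall>z. z \<noteq> 0 \<longrightarrow> det (Mmat a \<Theta> z) = 0"
  shows "((\<forall>z\<in>unit_circle. Re (symb \<Theta> z) \<ge> 0) \<or> (\<forall>z\<in>unit_circle. Re (symb \<Theta> z) \<le> 0))
    \<and> ((\<forall>z\<in>unit_circle. Re (symb \<Theta> z) \<ge> 0) \<longleftrightarrow> s_pos a \<Theta> = 1 \<and> s_neg a \<Theta> = 0)
    \<and> ((\<forall>z\<in>unit_circle. Re (symb \<Theta> z) \<le> 0) \<longleftrightarrow> s_pos a \<Theta> = 0 \<and> s_neg a \<Theta> = 1)"
proof -
  note sym = assms(5)
  have idt: "symb \<Theta> z * symb \<Theta> (-z) = symb \<Theta> (z^2) * Ff a \<Theta> z" if "z \<noteq> 0" for z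
    using assms(6) that det_Mmat[of a \<Theta> z] by simp
  obtain c where c: "c \<noteq> 0" "\<And>z. z \<noteq> 0 \<Longrightarrow> Ff a \<Theta> z = c"
    using G_const[OF assms(2) assms(4) idt Ff_holo] by blast
  define th where "th z = Re (symb \<Theta> z)" for z
  define pa where "pa z = (cmod (symb a z))^2" for z
  have Tre: "symb \<Theta> z = complex_of_real (th z)" if "cmod z = 1" for z
  proof -
    have "cnj (symb \<Theta> z) = symb \<Theta> z" by (rule symb_real_circle[OF sym that])
    then have "Im (cnj (symb \<Theta> z)) = Im (symb \<Theta> z)" by simp
    then have "Im (symb \<Theta> z) = 0" by simp
    then show ?thesis unfolding th_def by (simp add: complex_eq_iff)
  qed
  have Pre: "symb a z * symb_star a z = complex_of_real (pa z)" if "cmod z = 1" for z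
    unfolding pa_def by (rule symb_abs_circle[OF that])
  have pa0: "pa z \<ge> 0" for z unfolding pa_def by simp
  have Ffre: "Ff a \<Theta> z = complex_of_real (th z * pa (-z) + th (-z) * pa z)" if z: "cmod z = 1" for z
  proof -
    have z': "cmod (-z) = 1" using z by simp
    show ?thesis unfolding Ff_def
      using Tre[OF z] Tre[OF z'] Pre[OF z] Pre[OF z'] by (simp add: mult.assoc)
  qed
  define r where "r = th 1 * pa (-1) + th (-1) * pa 1"
  have cr: "c = complex_of_real r" using c(2)[of 1] Ffre[of 1] unfolding r_def by simp
  have r0: "r \<noteq> 0" using c(1) cr by simp
  have Fr: "th z * pa (-z) + th (-z) * pa z = r" if z: "cmod z = 1" for z
  proof -
    have "z \<noteq> 0" using z by auto
    then have "complex_of_real (th z * pa (-z) + th (-z) * pa z) = complex_of_real r"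
      using c(2)[of z] Ffre[OF z] cr by simp
    then show ?thesis using of_real_eq_iff by blast
  qed
  have Tr: "th z * th (-z) = th (z^2) * r" if z: "cmod z = 1" for z
  proof -
    have z0: "z \<noteq> 0" using z by auto
    have z': "cmod (-z) = 1" "cmod (z^2) = 1" using z by (simp_all add: norm_power)
    have "complex_of_real (th z * th (-z)) = complex_of_real (th (z^2) * r)"
      using idt[OF z0] c(2)[OF z0] cr Tre[OF z] Tre[OF z'(1)] Tre[OF z'(2)] by simp
    then show ?thesis using of_real_eq_iff by blast
  qed
  define \<sigma> where "\<sigma> = sgn r"
  have \<sigma>2: "\<sigma> * \<sigma> = 1" unfolding \<sigma>_def using r0 by (auto simp: sgn_real_def)
  have \<sigma>r: "\<sigma> * r = \<bar>r\<bar>" unfolding \<sigma>_def by (simp add: sgn_mult_self_eq abs_sgn)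
  define f where "f t = \<sigma> * th (cis t)" for t
  have cis1: "cmod (cis t) = 1" for t by simp
  have fnn: "f t \<ge> 0" for t
  proof (rule sign_lemma[where f = f and K = "\<bar>r\<bar>" and ?\<theta>0.0 = t])
    show "continuous_on UNIV f"
      unfolding f_def th_def symb_def
      by (intro continuous_intros) (auto simp: cis_neq_zero)
    show "f (t + 2*pi) = f t" for t
      unfolding f_def by (simp add: cis_mult[symmetric] add.commute)
    show "\<bar>r\<bar> > 0" using r0 by simp
    show "f (2*t) * \<bar>r\<bar> = f t * f (t + pi)" for t
    proof -
      have e1: "cis (t + pi) = - cis t" by (simp add: cis_mult[symmetric] add.commute)
      have e2: "cis (2*t) = (cis t)^2" by (simp only: power2_eq_square cis_mult mult_2)
      have "f t * f (t + pi) = (\<sigma> * \<sigma>) * (th (cis t) * th (- cis t))"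
        unfolding f_def e1 by (simp add: algebra_simps)
      also have "\<dots> = th ((cis t)^2) * r" using Tr[OF cis1] \<sigma>2 by simp
      finally have A: "f t * f (t + pi) = th ((cis t)^2) * r" .
      have "f (2*t) * \<bar>r\<bar> = (\<sigma> * \<sigma>) * (th ((cis t)^2) * r)"
        unfolding f_def e2 \<sigma>r[symmetric] by (simp add: algebra_simps)
      then show ?thesis using A \<sigma>2 by simp
    qed
    show "f (al + pi) > 0" if "f al = 0" for al
    proof -
      have e1: "cis (al + pi) = - cis al" by (simp add: cis_mult[symmetric] add.commute)
      have th0: "th (cis al) = 0" using that \<sigma>2 unfolding f_def by auto
      have "th (- cis al) * pa (cis al) = r" using Fr[OF cis1[of al]] th0 by simp
      then have "(\<sigma> * th (- cis al)) * pa (cis al) = \<bar>r\<bar>" using \<sigma>r by (simp add: algebra_simps)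
      moreover have "\<bar>r\<bar> > 0" using r0 by simp
      ultimately have "(\<sigma> * th (- cis al)) * pa (cis al) > 0" by simp
      then have "\<sigma> * th (- cis al) > 0" using pa0[of "cis al"] by (simp add: zero_less_mult_iff)
      then show ?thesis unfolding f_def e1 .
    qed
  qed
  have sgnT: "\<sigma> * th z \<ge> 0" if z: "cmod z = 1" for z
  proof -
    have "z \<noteq> 0" using z by auto
    then have "cis (Arg z) = z" using z by (simp add: cis_Arg sgn_eq)
    then show ?thesis using fnn[of "Arg z"] unfolding f_def by simp
  qed
  define \<tau> where "\<tau> z = th z - th (z^2) * pa z + (th (-z) - th (z^2) * pa (-z))" for z
  have tau_pos: "r * \<tau> z > 0" if z: "cmod z = 1" for z
  proof -
    let ?x = "th z" and ?y = "th (-z)" and ?t = "th (z^2)" and ?p = "pa z" and ?q = "pa (-z)"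
    have F: "?x * ?q + ?y * ?p = r" using Fr[OF z] .
    have X: "?x * ?y = ?t * r" using Tr[OF z] .
    have "r * \<tau> z = r * ?x + r * ?y - (?t * r) * (?p + ?q)" unfolding \<tau>_def by (simp add: algebra_simps)
    also have "\<dots> = (?x * ?q + ?y * ?p) * ?x + (?x * ?q + ?y * ?p) * ?y - (?x * ?y) * (?p + ?q)"
      using F X by simp
    also have "\<dots> = ?x * ?x * ?q + ?y * ?y * ?p" by (simp add: algebra_simps)
    finally have eq: "r * \<tau> z = ?x * ?x * ?q + ?y * ?y * ?p" .
    have q0: "?q \<ge> 0" and p0: "?p \<ge> 0" using pa0 by auto
    have "?x * ?q \<noteq> 0 \<or> ?y * ?p \<noteq> 0" using F r0 by auto
    then have "?x * ?x * ?q > 0 \<or> ?y * ?y * ?p > 0"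
      using q0 p0 by (auto simp: zero_less_mult_iff)
    moreover have "?x * ?x * ?q \<ge> 0" "?y * ?y * ?p \<ge> 0" using q0 p0 by auto
    ultimately show ?thesis unfolding eq by linarith
  qed
  have nu: "nu_pos (Mmat a \<Theta> z) = (if r > 0 then 1 else 0) \<and> nu_neg (Mmat a \<Theta> z) = (if r < 0 then 1 else 0)"
    if z: "cmod z = 1" for z
  proof -
    have z0: "z \<noteq> 0" using z by auto
    have z': "cmod (-z) = 1" "cmod (z^2) = 1" using z by (simp_all add: norm_power)
    have C: "Mmat a \<Theta> z \<in> carrier_mat 2 2" unfolding Mmat_def by simp
    have tr: "Mmat a \<Theta> z $$ (0,0) + Mmat a \<Theta> z $$ (1,1) = complex_of_real (\<tau> z)"
      unfolding Mmat_trace \<tau>_def using Tre[OF z] Tre[OF z'(1)] Tre[OF z'(2)] Pre[OF z] Pre[OF z'(1)]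
      by simp
    have "(\<tau> z > 0 \<longleftrightarrow> r > 0) \<and> (\<tau> z < 0 \<longleftrightarrow> r < 0)"
      using tau_pos[OF z] r0 by (auto simp: zero_less_mult_iff)
    then show ?thesis using nu_rank1[OF C assms(6)[rule_format, OF z0] tr] by simp
  qed
  have uc: "z \<in> unit_circle \<longleftrightarrow> cmod z = 1" for z unfolding unit_circle_def by simp
  have one: "1 \<in> unit_circle" using uc by simp
  have sp: "s_pos a \<Theta> = (if r > 0 then 1 else 0)"
    unfolding s_pos_def by (rule Max_const_image[OF one]) (use nu uc in blast)
  have sn: "s_neg a \<Theta> = (if r < 0 then 1 else 0)"
    unfolding s_neg_def by (rule Max_const_image[OF one]) (use nu uc in blast)
  have m1: "cmod (-1::complex) = 1" by simp
  have notboth: "\<not> ((\<forall>z\<in>unit_circle. Re (symb \<Theta> z) \<ge> 0) \<and> (\<forall>z\<in>unit_circle. Re (symb \<Theta> z) \<le> 0))"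
  proof
    assume h: "(\<forall>z\<in>unit_circle. Re (symb \<Theta> z) \<ge> 0) \<and> (\<forall>z\<in>unit_circle. Re (symb \<Theta> z) \<le> 0)"
    have "th 1 = 0" "th (-1) = 0" using h one m1 uc unfolding th_def by (meson order_antisym)+
    then show False using r0 unfolding r_def by simp
  qed
  show ?thesis
  proof (cases "r > 0")
    case True
    then have "\<sigma> = 1" unfolding \<sigma>_def by simp
    then have pos: "\<forall>z\<in>unit_circle. Re (symb \<Theta> z) \<ge> 0" using sgnT uc unfolding th_def by simp
    show ?thesis using pos notboth sp sn True by auto
  next
    case False
    then have rn: "r < 0" using r0 by simp
    then have "\<sigma> = -1" unfolding \<sigma>_def by simp
    then have neg: "\<forall>z\<in>unit_circle. Re (symb \<Theta> z) \<le> 0" using sgnT uc unfolding th_def by fastforce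
    show ?thesis using neg notboth sp sn rn by auto
  qed
qed

end
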